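(* A countable group $G$ (with a proper left invariant metric) is locally finite if and only if $G$ is of flat growth, i.e. $G$ is of growth type at most a constant function.
   Context: A proper left invariant metric is $d(g,h)=\|g^{-1}h\|$ for a proper norm (zero only at identity, symmetric, subadditive, finite balls). A group is locally finite if every finitely generated subgroup is finite. An $s$-scale chain of length $m$ from $x$ to $y$ is $x=x_0,\dots,x_m=y$ with $d(x_i,x_{i+1})<s$; $A_g^{(n,s)}$ is the set of $h$ joined to $g$ by an $s$-scale chain of length $n$, and $gr_{(s,g)}(n)=\#A_g^{(n,s)}$. $u\preceq v$ means there is $C>0$ with $u(x)\le Cv(Cx)$ for large $x$. $G$ is of growth type at most $f$ if $gr_{(s,g)}\preceq f$ for all $g\in G$, $s>0$. *)

theory Defs
  imports "HOL-Algebra.Algebra" "HOL-Library.Countable_Set"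
begin

definition proper_norm :: "('a, 'b) monoid_scheme \<Rightarrow> ('a \<Rightarrow> real) \<Rightarrow> bool" where
  "proper_norm G N \<longleftrightarrow>
     (\<forall>x\<in>carrier G. N x \<ge> 0) \<and>
     (\<forall>x\<in>carrier G. N x = 0 \<longleftrightarrow> x = \<one>\<^bsub>G\<^esub>) \<and>
     (\<forall>x\<in>carrier G. N (inv\<^bsub>G\<^esub> x) = N x) \<and>
     (\<forall>x\<in>carrier G. \<forall>y\<in>carrier G. N (x \<otimes>\<^bsub>G\<^esub> y) \<le> N x + N y) \<and>
     (\<forall>r::real. finite {x \<in> carrier G. N x \<le> r})"

definition norm_dist :: "('a, 'b) monoid_scheme \<Rightarrow> ('a \<Rightarrow> real) \<Rightarrow> 'a \<Rightarrow> 'a \<Rightarrow> real" where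
  "norm_dist G N g h = N (inv\<^bsub>G\<^esub> g \<otimes>\<^bsub>G\<^esub> h)"

definition locally_finite_group :: "('a, 'b) monoid_scheme \<Rightarrow> bool" where
  "locally_finite_group G \<longleftrightarrow>
     (\<forall>S. S \<subseteq> carrier G \<and> finite S \<longrightarrow> finite (generate G S))"

definition scale_chain ::
  "('a, 'b) monoid_scheme \<Rightarrow> ('a \<Rightarrow> real) \<Rightarrow> real \<Rightarrow> nat \<Rightarrow> 'a \<Rightarrow> 'a \<Rightarrow> bool" where
  "scale_chain G N s m x y \<longleftrightarrow>
     (\<exists>c :: nat \<Rightarrow> 'a. c 0 = x \<and> c m = y \<and> (\<forall>i\<le>m. c i \<in> carrier G) \<and>
        (\<forall>i<m. norm_dist G N (c i) (c (Suc i)) < s))"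

definition chain_ball ::
  "('a, 'b) monoid_scheme \<Rightarrow> ('a \<Rightarrow> real) \<Rightarrow> nat \<Rightarrow> real \<Rightarrow> 'a \<Rightarrow> 'a set" where
  "chain_ball G N n s g = {h. scale_chain G N s n g h}"

definition growth_fun ::
  "('a, 'b) monoid_scheme \<Rightarrow> ('a \<Rightarrow> real) \<Rightarrow> real \<Rightarrow> 'a \<Rightarrow> nat \<Rightarrow> real" where
  "growth_fun G N s g n = real (card (chain_ball G N n s g))"

definition growth_preceq :: "(nat \<Rightarrow> real) \<Rightarrow> (real \<Rightarrow> real) \<Rightarrow> bool" where
  "growth_preceq u v \<longleftrightarrow> (\<exists>C>0. \<forall>\<^sub>F n in sequentially. u n \<le> C * v (C * real n))"

definition growth_type_at_most ::
  "('a, 'b) monoid_scheme \<Rightarrow> ('a \<Rightarrow> real) \<Rightarrow> (real \<Rightarrow> real) \<Rightarrow> bool" where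
  "growth_type_at_most G N f \<longleftrightarrow>
     (\<forall>g\<in>carrier G. \<forall>s>0. growth_preceq (growth_fun G N s g) f)"

definition flat_growth :: "('a, 'b) monoid_scheme \<Rightarrow> ('a \<Rightarrow> real) \<Rightarrow> bool" where
  "flat_growth G N \<longleftrightarrow> (\<exists>c::real. growth_type_at_most G N (\<lambda>_. c))"

end

theory Submission
  imports Defs
begin

context
  fixes G :: "('a, 'b) monoid_scheme" (structure) and N :: "'a \<Rightarrow> real"
  assumes grp: "group G" and pn: "proper_norm G N"
begin

lemma nd_self: "x \<in> carrier G \<Longrightarrow> norm_dist G N x x = 0"
proof -
  interpret group G by (rule grp)
  assume "x \<in> carrier G"
  thus ?thesis using pn unfolding norm_dist_def proper_norm_def by simp
qed

lemma nd_left: "a \<in> carrier G \<Longrightarrow> x \<in> carrier G \<Longrightarrow> y \<in> carrier G \<Longrightarrow>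
  norm_dist G N (a \<otimes>\<^bsub>G\<^esub> x) (a \<otimes>\<^bsub>G\<^esub> y) = norm_dist G N x y"
proof -
  interpret group G by (rule grp)
  assume a: "a \<in> carrier G" "x \<in> carrier G" "y \<in> carrier G"
  have "inv (a \<otimes> x) \<otimes> (a \<otimes> y) = (inv x \<otimes> inv a) \<otimes> (a \<otimes> y)"
    using a by (simp add: inv_mult_group)
  also have "\<dots> = inv x \<otimes> ((inv a \<otimes> a) \<otimes> y)" using a by (simp only: m_assoc inv_closed m_closed)
  also have "\<dots> = inv x \<otimes> y" using a by simp
  finally have "inv (a \<otimes> x) \<otimes> (a \<otimes> y) = inv x \<otimes> y" .
  thus ?thesis unfolding norm_dist_def by simp
qed

lemma chain_carrier: "scale_chain G N s n x y \<Longrightarrow> x \<in> carrier G \<and> y \<in> carrier G"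
  unfolding scale_chain_def by auto

lemma chain_0: "scale_chain G N s 0 x y \<longleftrightarrow> x = y \<and> x \<in> carrier G"
  unfolding scale_chain_def by auto

lemma chain_Suc: "scale_chain G N s (Suc n) x y \<longleftrightarrow>
   (\<exists>z. scale_chain G N s n x z \<and> y \<in> carrier G \<and> norm_dist G N z y < s)"
proof
  assume "scale_chain G N s (Suc n) x y"
  then obtain c where c: "c 0 = x" "c (Suc n) = y" "\<forall>i\<le>Suc n. c i \<in> carrier G"
    "\<forall>i<Suc n. norm_dist G N (c i) (c (Suc i)) < s" unfolding scale_chain_def by blast
  have "scale_chain G N s n x (c n)" unfolding scale_chain_def
    using c by (intro exI[of _ c]) auto
  thus "\<exists>z. scale_chain G N s n x z \<and> y \<in> carrier G \<and> norm_dist G N z y < s"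
    using c by auto
next
  assume "\<exists>z. scale_chain G N s n x z \<and> y \<in> carrier G \<and> norm_dist G N z y < s"
  then obtain z c where c: "c 0 = x" "c n = z" "\<forall>i\<le>n. c i \<in> carrier G"
    "\<forall>i<n. norm_dist G N (c i) (c (Suc i)) < s" and y: "y \<in> carrier G" "norm_dist G N z y < s"
    unfolding scale_chain_def by blast
  show "scale_chain G N s (Suc n) x y" unfolding scale_chain_def
  proof (intro exI[of _ "c(Suc n := y)"] conjI allI impI)
    show "(c(Suc n := y)) 0 = x" using c by simp
    show "(c(Suc n := y)) (Suc n) = y" by simp
    fix i
    show "i \<le> Suc n \<Longrightarrow> (c(Suc n := y)) i \<in> carrier G" using c y
      by (cases "i = Suc n") auto
    show "i < Suc n \<Longrightarrow> norm_dist G N ((c(Suc n := y)) i) ((c(Suc n := y)) (Suc i)) < s"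
      using c y by (cases "i = n") (auto simp: less_Suc_eq)
  qed
qed

lemma chain_trans: "scale_chain G N s m x y \<Longrightarrow> scale_chain G N s n y z \<Longrightarrow>
   scale_chain G N s (m + n) x z"
proof (induction n arbitrary: z)
  case 0
  thus ?case by (simp add: chain_0)
next
  case (Suc n)
  then obtain w where "scale_chain G N s n y w" "z \<in> carrier G" "norm_dist G N w z < s"
    by (auto simp: chain_Suc)
  with Suc.IH[OF Suc.prems(1)] show ?case by (auto simp: chain_Suc)
qed

lemma chain_const: "s > 0 \<Longrightarrow> y \<in> carrier G \<Longrightarrow> scale_chain G N s k y y"
  unfolding scale_chain_def by (intro exI[of _ "\<lambda>_. y"]) (auto simp: nd_self)

lemma chain_left: "scale_chain G N s n x y \<Longrightarrow> a \<in> carrier G \<Longrightarrow>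
   scale_chain G N s n (a \<otimes>\<^bsub>G\<^esub> x) (a \<otimes>\<^bsub>G\<^esub> y)"
proof -
  interpret group G by (rule grp)
  assume h: "scale_chain G N s n x y" and a: "a \<in> carrier G"
  then obtain c where c: "c 0 = x" "c n = y" "\<forall>i\<le>n. c i \<in> carrier G"
    "\<forall>i<n. norm_dist G N (c i) (c (Suc i)) < s" unfolding scale_chain_def by blast
  show ?thesis unfolding scale_chain_def
    using c a by (intro exI[of _ "\<lambda>i. a \<otimes> c i"]) (auto simp: nd_left)
qed

lemma chain_ball_finite: "finite (chain_ball G N n s g)"
proof (induction n)
  case 0
  have "chain_ball G N 0 s g \<subseteq> {g}" unfolding chain_ball_def by (auto simp: chain_0)
  thus ?case using finite_subset by blast
next
  case (Suc n)
  interpret group G by (rule grp)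
  let ?B = "{x \<in> carrier G. N x \<le> s}"
  have fB: "finite ?B" using pn unfolding proper_norm_def by blast
  have "chain_ball G N (Suc n) s g \<subseteq> (\<lambda>(z, x). z \<otimes> x) ` (chain_ball G N n s g \<times> ?B)"
  proof
    fix y assume "y \<in> chain_ball G N (Suc n) s g"
    then obtain z where z: "scale_chain G N s n g z" "y \<in> carrier G" "norm_dist G N z y < s"
      unfolding chain_ball_def by (auto simp: chain_Suc)
    have zc: "z \<in> carrier G" using chain_carrier[OF z(1)] by simp
    have "y = z \<otimes> (inv z \<otimes> y)" using zc z(2) by (simp add: m_assoc[symmetric])
    moreover have "inv z \<otimes> y \<in> ?B" using z zc unfolding norm_dist_def by auto
    ultimately show "y \<in> (\<lambda>(z, x). z \<otimes> x) ` (chain_ball G N n s g \<times> ?B)"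
      using z(1) unfolding chain_ball_def by force
  qed
  thus ?case using Suc.IH fB by (meson finite_SigmaI finite_imageI finite_subset)
qed

lemma chain_ball_gen: "g \<in> carrier G \<Longrightarrow>
  chain_ball G N n s g \<subseteq> (\<lambda>x. g \<otimes>\<^bsub>G\<^esub> x) ` generate G {x \<in> carrier G. N x < s}"
proof (induction n)
  case 0
  interpret group G by (rule grp)
  show ?case using 0 unfolding chain_ball_def
    by (auto simp: chain_0 intro!: image_eqI[of _ _ "\<one>"] generate.one)
next
  case (Suc n)
  interpret group G by (rule grp)
  let ?B = "{x \<in> carrier G. N x < s}"
  show ?case
  proof
    fix y assume "y \<in> chain_ball G N (Suc n) s g"
    then obtain z where z: "scale_chain G N s n g z" "y \<in> carrier G" "norm_dist G N z y < s"
      unfolding chain_ball_def by (auto simp: chain_Suc)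
    have zc: "z \<in> carrier G" using chain_carrier[OF z(1)] by simp
    obtain w where w: "w \<in> generate G ?B" "z = g \<otimes> w"
      using Suc z(1) unfolding chain_ball_def by blast
    have wc: "w \<in> carrier G" using w(1) generate_in_carrier[of ?B] by blast
    have ib: "inv z \<otimes> y \<in> ?B" using z zc unfolding norm_dist_def by auto
    have "y = g \<otimes> (w \<otimes> (inv z \<otimes> y))"
      using zc z(2) wc Suc.prems w(2) by (simp add: m_assoc[symmetric])
    moreover have "w \<otimes> (inv z \<otimes> y) \<in> generate G ?B"
      using w(1) ib by (blast intro: generate.eng generate.incl)
    ultimately show "y \<in> (\<lambda>x. g \<otimes> x) ` generate G ?B" by blast
  qed
qed

lemma gen_in_chain: "s > 0 \<Longrightarrow> S \<subseteq> carrier G \<Longrightarrow> (\<forall>x\<in>S. N x < s) \<Longrightarrow>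
   h \<in> generate G S \<Longrightarrow> \<exists>n. scale_chain G N s n \<one>\<^bsub>G\<^esub> h"
proof -
  interpret group G by (rule grp)
  assume s: "s > 0" and S: "S \<subseteq> carrier G" "\<forall>x\<in>S. N x < s"
  assume "h \<in> generate G S"
  thus ?thesis
  proof (induction rule: generate.induct)
    case one
    thus ?case using chain_const[OF s, of \<one> 0] by auto
  next
    case (incl h)
    have "scale_chain G N s (Suc 0) \<one> h"
      unfolding chain_Suc using incl S chain_const[OF s, of \<one> 0]
      by (intro exI[of _ \<one>]) (auto simp: norm_dist_def)
    thus ?case by blast
  next
    case (inv h)
    have "N (inv h) = N h" using pn inv S unfolding proper_norm_def by auto
    hence "scale_chain G N s (Suc 0) \<one> (inv h)"
      unfolding chain_Suc using inv S chain_const[OF s, of \<one> 0]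
      by (intro exI[of _ \<one>]) (auto simp: norm_dist_def)
    thus ?case by blast
  next
    case (eng h1 h2)
    obtain n1 n2 where n: "scale_chain G N s n1 \<one> h1" "scale_chain G N s n2 \<one> h2"
      using eng by blast
    have h1: "h1 \<in> carrier G" using chain_carrier[OF n(1)] by simp
    have "scale_chain G N s n2 (h1 \<otimes> \<one>) (h1 \<otimes> h2)" using chain_left[OF n(2) h1] .
    hence "scale_chain G N s n2 h1 (h1 \<otimes> h2)" using h1 by simp
    thus ?case using chain_trans[OF n(1)] by blast
  qed
qed

end

theorem mainTheorem18:
  fixes G :: "('a, 'b) monoid_scheme" and N :: "'a \<Rightarrow> real"
  assumes "group G" and "countable (carrier G)" and "proper_norm G N"
  shows "locally_finite_group G \<longleftrightarrow> flat_growth G N"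
proof
  assume lf: "locally_finite_group G"
  have "growth_type_at_most G N (\<lambda>_. 1)"
    unfolding growth_type_at_most_def growth_preceq_def
  proof (intro ballI allI impI)
    fix g s assume g: "g \<in> carrier G" and s: "(s::real) > 0"
    let ?B = "{x \<in> carrier G. N x < s}"
    have "finite {x \<in> carrier G. N x \<le> s}" using assms(3) unfolding proper_norm_def by blast
    moreover have "?B \<subseteq> {x \<in> carrier G. N x \<le> s}" by auto
    ultimately have "finite ?B" using finite_subset by blast
    have "?B \<subseteq> carrier G" by blast
    hence fg: "finite (generate G ?B)"
      using lf \<open>finite ?B\<close> unfolding locally_finite_group_def by simp
    define K where "K = card ((\<lambda>x. g \<otimes>\<^bsub>G\<^esub> x) ` generate G ?B)"
    have K: "growth_fun G N s g n \<le> real K" for n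
    proof -
      have "card (chain_ball G N n s g) \<le> K"
        unfolding K_def by (rule card_mono[OF finite_imageI[OF fg] chain_ball_gen[OF assms(1) assms(3) g]])
      thus ?thesis unfolding growth_fun_def by simp
    qed
    have "\<forall>\<^sub>F n in sequentially. growth_fun G N s g n \<le> (real K + 1) * 1"
      using K by (intro always_eventually allI) (smt (verit))
    thus "\<exists>C>0. \<forall>\<^sub>F n in sequentially. growth_fun G N s g n \<le> C * 1"
      by (intro exI[of _ "real K + 1"] conjI) simp_all
  qed
  thus "flat_growth G N" unfolding flat_growth_def by blast
next
  assume "flat_growth G N"
  then obtain c where c: "growth_type_at_most G N (\<lambda>_. c)" unfolding flat_growth_def by blast
  show "locally_finite_group G" unfolding locally_finite_group_def
  proof (intro allI impI)
    fix S assume S: "S \<subseteq> carrier G \<and> finite S"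
    define s where "s = 1 + (\<Sum>x\<in>S. N x)"
    have N0: "\<forall>x\<in>carrier G. N x \<ge> 0" using assms(3) unfolding proper_norm_def by blast
    have sum0: "(\<Sum>x\<in>S. N x) \<ge> 0" using S N0 by (intro sum_nonneg) blast
    have sS: "\<forall>x\<in>S. N x < s"
    proof
      fix x assume x: "x \<in> S"
      have "N x \<le> (\<Sum>x\<in>S. N x)" using S x N0 by (intro member_le_sum) auto
      thus "N x < s" unfolding s_def by simp
    qed
    have s0: "s > 0" unfolding s_def using sum0 by simp
    have one: "\<one>\<^bsub>G\<^esub> \<in> carrier G" using assms(1) by (simp add: group.is_monoid monoid.one_closed)
    obtain C where C: "C > 0" "\<forall>\<^sub>F n in sequentially. growth_fun G N s \<one>\<^bsub>G\<^esub> n \<le> C * c"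
      using c s0 one unfolding growth_type_at_most_def growth_preceq_def by blast
    then obtain n0 where n0: "\<And>n. n \<ge> n0 \<Longrightarrow> growth_fun G N s \<one>\<^bsub>G\<^esub> n \<le> C * c"
      unfolding eventually_sequentially by blast
    have mono: "chain_ball G N m s \<one>\<^bsub>G\<^esub> \<subseteq> chain_ball G N m' s \<one>\<^bsub>G\<^esub>" if "m \<le> m'" for m m'
    proof
      fix y assume "y \<in> chain_ball G N m s \<one>\<^bsub>G\<^esub>"
      hence y: "scale_chain G N s m \<one>\<^bsub>G\<^esub> y" unfolding chain_ball_def by simp
      have yc: "y \<in> carrier G" using chain_carrier[OF assms(1) assms(3) y] by simp
      have "scale_chain G N s (m' - m) y y"
        by (rule chain_const[OF assms(1) assms(3) s0 yc])
      from chain_trans[OF assms(1) assms(3) y this] that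
      show "y \<in> chain_ball G N m' s \<one>\<^bsub>G\<^esub>" unfolding chain_ball_def by simp
    qed
    show "finite (generate G S)"
    proof (rule ccontr)
      assume inf: "infinite (generate G S)"
      obtain F where F: "F \<subseteq> generate G S" "finite F" "card F = nat \<lceil>C * c\<rceil> + 1"
        using infinite_arbitrarily_large[OF inf] by blast
      have "\<forall>h\<in>F. \<exists>n. h \<in> chain_ball G N n s \<one>\<^bsub>G\<^esub>"
      proof
        fix h assume "h \<in> F"
        hence "h \<in> generate G S" using F(1) by blast
        from gen_in_chain[OF assms(1) assms(3) s0 _ sS this] S
        show "\<exists>n. h \<in> chain_ball G N n s \<one>\<^bsub>G\<^esub>" unfolding chain_ball_def by simp
      qed
      then obtain f where f: "\<forall>h\<in>F. h \<in> chain_ball G N (f h) s \<one>\<^bsub>G\<^esub>" by metis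
      define m where "m = max n0 (Max (f ` F \<union> {0}))"
      have "F \<subseteq> chain_ball G N m s \<one>\<^bsub>G\<^esub>"
      proof
        fix h assume h: "h \<in> F"
        have "f h \<le> Max (f ` F \<union> {0})" using F(2) h by (intro Max_ge) auto
        hence "f h \<le> m" unfolding m_def by simp
        thus "h \<in> chain_ball G N m s \<one>\<^bsub>G\<^esub>" using mono f h by blast
      qed
      hence "card F \<le> card (chain_ball G N m s \<one>\<^bsub>G\<^esub>)"
        by (rule card_mono[OF chain_ball_finite[OF assms(1) assms(3)]])
      hence "real (card F) \<le> growth_fun G N s \<one>\<^bsub>G\<^esub> m" unfolding growth_fun_def by simp
      also have "\<dots> \<le> C * c" using n0[of m] unfolding m_def by simp
      finally have "real (card F) \<le> C * c" .
      with F(3) show False by linarith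
    qed
  qed
qed

end
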